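(* Let $X,Y$ be complex Banach spaces, let $\mathcal B$ be any family of compact subsets of $X$ such that every $x\in X$ belongs to some $B\in\mathcal B$, let $f:\mathbb R^n\to\mathbb C$ be Bohr almost periodic and let $F:\mathbb R^n\times X\to Y$ be Bohr $\mathcal B$-almost periodic. Then $F_1(\mathbf t;x):=f(\mathbf t)F(\mathbf t;x)$, $\mathbf t\in\mathbb R^n$, $x\in X$, is Bohr $\mathcal B$-almost periodic.
   Context: A continuous $f:\mathbb R^n\to\mathbb C$ is Bohr almost periodic if for every $\epsilon>0$ there is $l>0$ such that every closed ball of radius $l$ in $\mathbb R^n$ contains a $\tau$ with $|f(\mathbf t+\tau)-f(\mathbf t)|\le\epsilon$ for all $\mathbf t$. A continuous $F:\mathbb R^n\times X\to Y$ is Bohr $\mathcal B$-almost periodic if for every $B\in\mathcal B$ and $\epsilon>0$ there exists $l>0$ such that for each $\mathbf t_0\in\mathbb R^n$ there exists $\tau$ with $|\tau-\mathbf t_0|\le l$ and $\|F(\mathbf t+\tau;x)-F(\mathbf t;x)\|_Y\le\epsilon$ for all $\mathbf t\in\mathbb R^n$, $x\in B$. *)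

theory Defs
  imports "HOL-Analysis.Analysis"
begin

class complex_vector = real_vector +
  fixes scaleC :: "complex \<Rightarrow> 'a \<Rightarrow> 'a" (infixr \<open>*\<^sub>C\<close> 75)
  assumes scaleC_add_right: "a *\<^sub>C (x + y) = a *\<^sub>C x + a *\<^sub>C y"
    and scaleC_add_left: "(a + b) *\<^sub>C x = a *\<^sub>C x + b *\<^sub>C x"
    and scaleC_scaleC: "a *\<^sub>C (b *\<^sub>C x) = (a * b) *\<^sub>C x"
    and scaleC_one: "1 *\<^sub>C x = x"
    and scaleR_scaleC: "scaleR r x = (complex_of_real r) *\<^sub>C x"

class complex_normed_vector = complex_vector + real_normed_vector +
  assumes norm_scaleC: "norm (a *\<^sub>C x) = cmod a * norm x"

definition bohr_ap :: "(real ^ 'n \<Rightarrow> complex) \<Rightarrow> bool" where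
  "bohr_ap f \<longleftrightarrow> continuous_on UNIV f \<and>
     (\<forall>\<epsilon>>0. \<exists>l>0. \<forall>t0. \<exists>\<tau>\<in>cball t0 l. \<forall>t. cmod (f (t + \<tau>) - f t) \<le> \<epsilon>)"

definition bohr_B_ap ::
  "'x set set \<Rightarrow> (real ^ 'n \<Rightarrow> 'x::topological_space \<Rightarrow> 'y::real_normed_vector) \<Rightarrow> bool" where
  "bohr_B_ap \<B> F \<longleftrightarrow> continuous_on UNIV (\<lambda>(t, x). F t x) \<and>
     (\<forall>B\<in>\<B>. \<forall>\<epsilon>>0. \<exists>l>0. \<forall>t0. \<exists>\<tau>. dist \<tau> t0 \<le> l \<and>
        (\<forall>t. \<forall>x\<in>B. norm (F (t + \<tau>) x - F t x) \<le> \<epsilon>))"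

end

theory Submission
  imports Defs
begin

lemma scaleC_diff_left: "((a - b) *\<^sub>C (x::'a::complex_vector)) = a *\<^sub>C x - b *\<^sub>C x"
  by (metis add_diff_cancel scaleC_add_left diff_add_cancel)

lemma scaleC_diff_right: "(a *\<^sub>C ((x::'a::complex_vector) - y)) = a *\<^sub>C x - a *\<^sub>C y"
  by (metis add_diff_cancel scaleC_add_right diff_add_cancel)

lemma scaleC_decomp: "a *\<^sub>C (y::'a::complex_vector) = Re a *\<^sub>R y + Im a *\<^sub>R (\<i> *\<^sub>C y)"
proof -
  have "a = complex_of_real (Re a) + complex_of_real (Im a) * \<i>"
    by (simp add: complex_eq_iff)
  then have "a *\<^sub>C y = complex_of_real (Re a) *\<^sub>C y + (complex_of_real (Im a) * \<i>) *\<^sub>C y"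
    by (metis scaleC_add_left)
  then show ?thesis by (simp add: scaleR_scaleC scaleC_scaleC)
qed

lemma bl_i: "bounded_linear (\<lambda>y::'a::complex_normed_vector. \<i> *\<^sub>C y)"
proof (rule bounded_linear_intro[where K=1])
  fix x y :: 'a show "\<i> *\<^sub>C (x + y) = \<i> *\<^sub>C x + \<i> *\<^sub>C y" by (rule scaleC_add_right)
next
  fix r and x :: 'a show "\<i> *\<^sub>C (r *\<^sub>R x) = r *\<^sub>R (\<i> *\<^sub>C x)"
    by (simp add: scaleR_scaleC scaleC_scaleC mult.commute)
next
  fix x :: 'a show "norm (\<i> *\<^sub>C x) \<le> norm x * 1" by (simp add: norm_scaleC)
qed

lemma continuous_on_scaleC:
  fixes g :: "'b::topological_space \<Rightarrow> complex" and k :: "'b \<Rightarrow> 'a::complex_normed_vector"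
  assumes "continuous_on S g" "continuous_on S k"
  shows "continuous_on S (\<lambda>z. g z *\<^sub>C k z)"
proof -
  have "continuous_on S (\<lambda>z. Re (g z) *\<^sub>R k z + Im (g z) *\<^sub>R (\<i> *\<^sub>C k z))"
    using assms bounded_linear.continuous_on[OF bl_i assms(2)]
    by (intro continuous_intros) auto
  then show ?thesis by (subst scaleC_decomp) 
qed

lemma shift_aux2: "(\<tau>::'a::real_normed_vector) \<in> cball (-t) l \<Longrightarrow> norm (t + \<tau>) \<le> l"
  unfolding mem_cball dist_norm by (metis minus_add_distrib norm_minus_cancel diff_conv_add_uminus add.commute)
lemma shift_aux1: "dist (\<tau>::'a::real_normed_vector) (-t) \<le> l \<Longrightarrow> t + \<tau> \<in> cball 0 l"
  using shift_aux2[of \<tau> t l] by (simp add: dist_commute)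

lemma bohr_ap_ucont:
  fixes f :: "real ^ 'n \<Rightarrow> complex"
  assumes "bohr_ap f" "e > 0"
  shows "\<exists>d>0. \<forall>t s. dist t s < d \<longrightarrow> cmod (f t - f s) \<le> e"
proof -
  have cont: "continuous_on UNIV f" using assms(1) by (simp add: bohr_ap_def)
  obtain l where l: "l > 0" "\<forall>t0. \<exists>\<tau>\<in>cball t0 l. \<forall>t. cmod (f (t + \<tau>) - f t) \<le> e/3"
  proof -
    have "e/3 > 0" using assms(2) by simp
    then show ?thesis using assms(1) that unfolding bohr_ap_def by blast
  qed
  have "uniformly_continuous_on (cball 0 (l+1)) f"
    by (rule compact_uniformly_continuous) (auto intro: continuous_on_subset[OF cont])
  then obtain d0 where d0: "d0 > 0" "\<forall>x\<in>cball 0 (l+1). \<forall>x'\<in>cball 0 (l+1). dist x' x < d0 \<longrightarrow> dist (f x') (f x) < e/3"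
  proof -
    have "e/3 > 0" using assms(2) by simp
    then show ?thesis using that \<open>uniformly_continuous_on (cball 0 (l+1)) f\<close> unfolding uniformly_continuous_on_def by blast
  qed
  show ?thesis
  proof (intro exI[of _ "min d0 1"] conjI allI impI)
    show "min d0 1 > 0" using d0 by simp
    fix t s :: "real ^ 'n" assume ts: "dist t s < min d0 1"
    obtain \<tau> where \<tau>: "\<tau> \<in> cball (-t) l" "\<forall>t. cmod (f (t + \<tau>) - f t) \<le> e/3" using l by blast
    have n1: "norm (t + \<tau>) \<le> l" using \<tau>(1) by (rule shift_aux2)
    have n2: "norm (s + \<tau>) \<le> l + 1"
    proof -
      have eq: "s + \<tau> = (t + \<tau>) + (s - t)" by simp
      have "norm (s + \<tau>) \<le> norm (t + \<tau>) + norm (s - t)"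
        unfolding eq by (rule norm_triangle_ineq)
      moreover have "norm (s - t) < 1" using ts by (simp add: dist_norm norm_minus_commute)
      ultimately show ?thesis using n1 by linarith
    qed
    have m1: "t + \<tau> \<in> cball 0 (l+1)" using n1 by simp
    have m2: "s + \<tau> \<in> cball 0 (l+1)" using n2 by simp
    have "dist (t + \<tau>) (s + \<tau>) < d0" using ts by (simp add: dist_norm del: add_diff_cancel_right add_diff_add)
    then have "dist (f (t + \<tau>)) (f (s + \<tau>)) < e/3"
      using d0(2) m1 m2 by (simp add: dist_commute)
    then have a: "cmod (f (t + \<tau>) - f (s + \<tau>)) \<le> e/3" by (simp add: dist_norm)
    have b: "cmod (f (t + \<tau>) - f t) \<le> e/3" "cmod (f (s + \<tau>) - f s) \<le> e/3" using \<tau>(2) by auto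
    have eq: "f t - f s = ((f (t + \<tau>) - f (s + \<tau>)) - (f (t + \<tau>) - f t)) + (f (s + \<tau>) - f s)"
      by simp
    have "cmod (f t - f s) \<le> cmod ((f (t + \<tau>) - f (s + \<tau>)) - (f (t + \<tau>) - f t)) + cmod (f (s + \<tau>) - f s)"
      unfolding eq by (rule norm_triangle_ineq)
    moreover have "cmod ((f (t + \<tau>) - f (s + \<tau>)) - (f (t + \<tau>) - f t)) \<le> cmod (f (t + \<tau>) - f (s + \<tau>)) + cmod (f (t + \<tau>) - f t)"
      by (rule norm_triangle_ineq4)
    ultimately have "cmod (f t - f s) \<le> cmod (f (t + \<tau>) - f (s + \<tau>)) + cmod (f (t + \<tau>) - f t) + cmod (f (s + \<tau>) - f s)"
      by linarith
    then show "cmod (f t - f s) \<le> e" using a b by linarith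
  qed
qed

lemma bohr_ap_bounded:
  fixes f :: "real ^ 'n \<Rightarrow> complex"
  assumes "bohr_ap f"
  shows "\<exists>M. \<forall>t. cmod (f t) \<le> M"
proof -
  have cont: "continuous_on UNIV f" using assms(1) by (simp add: bohr_ap_def)
  obtain l where l: "l > 0" "\<forall>t0. \<exists>\<tau>\<in>cball t0 l. \<forall>t. cmod (f (t + \<tau>) - f t) \<le> 1"
    using assms unfolding bohr_ap_def by (meson zero_less_one)
  have "compact (f ` cball 0 l)"
    by (rule compact_continuous_image) (auto intro: continuous_on_subset[OF cont])
  then obtain M where M: "\<forall>y\<in>f ` cball 0 l. norm y \<le> M"
    using compact_imp_bounded bounded_iff by metis
  show ?thesis
  proof (intro exI allI)
    fix t
    obtain \<tau> where \<tau>: "\<tau> \<in> cball (-t) l" "\<forall>t. cmod (f (t + \<tau>) - f t) \<le> 1" using l by blast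
    have "t + \<tau> \<in> cball 0 l" using \<tau>(1) shift_aux1 shift_aux2 by (auto simp: dist_commute)
    then have "cmod (f (t + \<tau>)) \<le> M" using M by auto
    moreover have "cmod (f (t + \<tau>) - f t) \<le> 1" using \<tau> by auto
    ultimately show "cmod (f t) \<le> M + 1"
      using norm_triangle_ineq4[of "f (t + \<tau>)" "f (t + \<tau>) - f t"] by simp
  qed
qed

lemma bohr_B_bounded:
  fixes F :: "real ^ 'n \<Rightarrow> 'x::real_normed_vector \<Rightarrow> 'y::real_normed_vector"
  assumes "bohr_B_ap \<B> F" "B \<in> \<B>" "compact B"
  shows "\<exists>M. \<forall>t. \<forall>x\<in>B. norm (F t x) \<le> M"
proof -
  have cont: "continuous_on UNIV (\<lambda>(t, x). F t x)" using assms(1) by (simp add: bohr_B_ap_def)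
  obtain l where l: "l > 0" "\<forall>t0. \<exists>\<tau>. dist \<tau> t0 \<le> l \<and> (\<forall>t. \<forall>x\<in>B. norm (F (t + \<tau>) x - F t x) \<le> 1)"
    using assms unfolding bohr_B_ap_def by (meson zero_less_one)
  have "compact ((\<lambda>(t, x). F t x) ` (cball 0 l \<times> B))"
    by (rule compact_continuous_image) (auto intro: continuous_on_subset[OF cont] compact_Times assms(3))
  then obtain M where M: "\<forall>y\<in>(\<lambda>(t, x). F t x) ` (cball 0 l \<times> B). norm y \<le> M"
    using compact_imp_bounded bounded_iff by metis
  show ?thesis
  proof (intro exI allI ballI)
    fix t x assume x: "x \<in> B"
    obtain \<tau> where \<tau>: "dist \<tau> (-t) \<le> l" "\<forall>t. \<forall>x\<in>B. norm (F (t + \<tau>) x - F t x) \<le> 1" using l by blast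
    have "t + \<tau> \<in> cball 0 l" using \<tau>(1) shift_aux1 shift_aux2 by (auto simp: dist_commute)
    then have "norm (F (t + \<tau>) x) \<le> M" using M x by force
    moreover have "norm (F (t + \<tau>) x - F t x) \<le> 1" using \<tau> x by auto
    ultimately show "norm (F t x) \<le> M + 1"
      using norm_triangle_ineq4[of "F (t + \<tau>) x" "F (t + \<tau>) x - F t x"] by simp
  qed
qed

lemma common_periods:
  fixes F :: "real ^ 'n \<Rightarrow> 'x \<Rightarrow> 'y::real_normed_vector" and f :: "real ^ 'n \<Rightarrow> complex"
  assumes PF: "\<forall>e>0. \<exists>l>0. \<forall>t0. \<exists>\<tau>. dist \<tau> t0 \<le> l \<and> (\<forall>t. \<forall>x\<in>B. norm (F (t + \<tau>) x - F t x) \<le> e)"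
    and Pf: "\<forall>e>0. \<exists>l>0. \<forall>t0. \<exists>\<tau>. dist \<tau> t0 \<le> l \<and> (\<forall>t. cmod (f (t + \<tau>) - f t) \<le> e)"
    and uc: "\<forall>e>0. \<exists>d>0. \<forall>t s. dist t s < d \<longrightarrow> cmod (f t - f s) \<le> e"
    and e: "e > 0"
  shows "\<exists>L>0. \<forall>t0. \<exists>\<tau>. dist \<tau> t0 \<le> L \<and> (\<forall>t. \<forall>x\<in>B. norm (F (t + \<tau>) x - F t x) \<le> e)
            \<and> (\<forall>t. cmod (f (t + \<tau>) - f t) \<le> e)"
proof -
  have e3: "e/3 > 0" using e by simp
  obtain d where d: "d > 0" "\<forall>t s. dist t s < d \<longrightarrow> cmod (f t - f s) \<le> e/3"
    using uc[rule_format, OF e3] by blast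
  define P1 where "P1 \<sigma> \<longleftrightarrow> (\<forall>t. \<forall>x\<in>B. norm (F (t + \<sigma>) x - F t x) \<le> e/3)" for \<sigma>
  define P2 where "P2 \<sigma> \<longleftrightarrow> (\<forall>t. cmod (f (t + \<sigma>) - f t) \<le> e/3)" for \<sigma>
  obtain l1 where l1: "l1 > 0" "\<forall>t0. \<exists>\<tau>. dist \<tau> t0 \<le> l1 \<and> P1 \<tau>"
    using PF[rule_format, OF e3] unfolding P1_def by blast
  obtain l2 where l2: "l2 > 0" "\<forall>t0. \<exists>\<tau>. dist \<tau> t0 \<le> l2 \<and> P2 \<tau>"
    using Pf[rule_format, OF e3] unfolding P2_def by blast
  define l where "l = l1 + l2"
  define good where "good c p \<longleftrightarrow> P1 (fst p) \<and> P2 (snd p) \<and> dist (fst p - snd p) c < d/2"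
    for c :: "real ^ 'n" and p :: "(real ^ 'n) \<times> (real ^ 'n)"
  have cpt: "compact (cball (0::real ^ 'n) l)" by simp
  have opn: "\<And>T. T \<in> cball 0 l \<Longrightarrow> open (ball T (d/2))" by simp
  have cov: "cball (0::real^'n) l \<subseteq> \<Union> ((\<lambda>c. ball c (d/2)) ` cball 0 l)"
  proof
    fix x :: "real^'n" assume x: "x \<in> cball 0 l"
    show "x \<in> \<Union> ((\<lambda>c. ball c (d/2)) ` cball 0 l)" by (rule UN_I[OF x]) (simp add: d)
  qed
  obtain K where K: "K \<subseteq> cball (0::real^'n) l" "finite K" "cball 0 l \<subseteq> \<Union> ((\<lambda>c. ball c (d/2)) ` K)"
    by (rule compactE_image[OF cpt opn cov]) iprover
  define \<sigma> where "\<sigma> c = (SOME p. good c p)" for c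
  define R where "R = (\<Sum>c\<in>K. norm (fst (\<sigma> c)))"
  have R0: "R \<ge> 0" unfolding R_def by (simp add: sum_nonneg)
  show ?thesis
  proof (intro exI[of _ "l1 + R + 1"] conjI allI)
    show "l1 + R + 1 > 0" using l1 R0 by simp
    fix t0
    obtain \<tau>1 where \<tau>1: "dist \<tau>1 t0 \<le> l1" "P1 \<tau>1" using l1 by blast
    obtain \<tau>2 where \<tau>2: "dist \<tau>2 t0 \<le> l2" "P2 \<tau>2" using l2 by blast
    define dd where "dd = \<tau>1 - \<tau>2"
    have "dist \<tau>1 \<tau>2 \<le> dist \<tau>1 t0 + dist \<tau>2 t0" by (rule dist_triangle2)
    then have "norm dd \<le> l" using \<tau>1 \<tau>2 unfolding l_def dd_def by (simp add: dist_norm)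
    then have "dd \<in> cball 0 l" by simp
    then obtain c where c: "c \<in> K" "dd \<in> ball c (d/2)" using K(3) by blast
    have "good c (\<tau>1, \<tau>2)" unfolding good_def using \<tau>1 \<tau>2 c(2) dd_def by (simp add: dist_commute)
    then have gc: "good c (\<sigma> c)" unfolding \<sigma>_def by (rule someI)
    define s1 where "s1 = fst (\<sigma> c)"
    define s2 where "s2 = snd (\<sigma> c)"
    have s: "P1 s1" "P2 s2" "dist (s1 - s2) c < d/2" using gc unfolding good_def s1_def s2_def by auto
    have s1R: "norm s1 \<le> R" unfolding R_def s1_def
      by (rule member_le_sum[where f = "\<lambda>c. norm (fst (\<sigma> c))"]) (use c K in auto)
    show "\<exists>\<tau>. dist \<tau> (t0) \<le> l1 + R + 1 \<and> (\<forall>t. \<forall>x\<in>B. norm (F (t + \<tau>) x - F t x) \<le> e)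
            \<and> (\<forall>t. cmod (f (t + \<tau>) - f t) \<le> e)"
    proof (intro exI[of _ "\<tau>1 - s1"] conjI allI ballI)
      have eq: "\<tau>1 - s1 - t0 = (\<tau>1 - t0) - s1" by (simp add: algebra_simps)
      have "norm (\<tau>1 - s1 - t0) \<le> norm (\<tau>1 - t0) + norm s1"
        unfolding eq by (rule norm_triangle_ineq4)
      then show "dist (\<tau>1 - s1) t0 \<le> l1 + R + 1" using \<tau>1(1) s1R by (simp add: dist_norm)
    next
      fix t x assume x: "x \<in> B"
      have eq1: "t + (\<tau>1 - s1) = (t - s1) + \<tau>1" by (simp add: algebra_simps)
      have eq2: "t = (t - s1) + s1" by simp
      have "F (t + (\<tau>1 - s1)) x - F t x
          = (F ((t - s1) + \<tau>1) x - F (t - s1) x) - (F ((t - s1) + s1) x - F (t - s1) x)"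
        using eq1 eq2 by (metis diff_diff_eq2 diff_add_cancel add_diff_cancel)
      also have "norm \<dots> \<le> norm (F ((t - s1) + \<tau>1) x - F (t - s1) x) + norm (F ((t - s1) + s1) x - F (t - s1) x)"
        by (rule norm_triangle_ineq4)
      finally have "norm (F (t + (\<tau>1 - s1)) x - F t x) \<le> norm (F ((t - s1) + \<tau>1) x - F (t - s1) x) + norm (F ((t - s1) + s1) x - F (t - s1) x)" .
      moreover have "norm (F ((t - s1) + \<tau>1) x - F (t - s1) x) \<le> e/3" using \<tau>1(2) x unfolding P1_def by blast
      moreover have "norm (F ((t - s1) + s1) x - F (t - s1) x) \<le> e/3" using s(1) x unfolding P1_def by blast
      ultimately show "norm (F (t + (\<tau>1 - s1)) x - F t x) \<le> e" using e by linarith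
    next
      fix t
      have "dist (dd - (s1 - s2)) 0 \<le> dist dd c + dist (s1 - s2) c"
        using dist_triangle2[of dd "s1 - s2" c] by (simp add: dist_norm)
      have "norm (dd - (s1 - s2)) \<le> norm (dd - c) + norm ((s1 - s2) - c)"
      proof -
        have eq: "dd - (s1 - s2) = (dd - c) - ((s1 - s2) - c)" by (simp add: algebra_simps)
        show ?thesis unfolding eq by (rule norm_triangle_ineq4)
      qed
      moreover have "norm (dd - c) < d/2" using c(2) by (simp add: dist_norm norm_minus_commute)
      moreover have "norm ((s1 - s2) - c) < d/2" using s(3) by (simp add: dist_norm)
      ultimately have nd: "norm (dd - (s1 - s2)) < d" by linarith
      have eqt: "(t + (\<tau>1 - s1)) - ((t - s2) + \<tau>2) = dd - (s1 - s2)"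
        unfolding dd_def by (simp add: algebra_simps)
      have "dist (t + (\<tau>1 - s1)) ((t - s2) + \<tau>2) < d" unfolding dist_norm eqt using nd .
      then have a: "cmod (f (t + (\<tau>1 - s1)) - f ((t - s2) + \<tau>2)) \<le> e/3" using d(2) by blast
      have b: "cmod (f ((t - s2) + \<tau>2) - f (t - s2)) \<le> e/3" using \<tau>2(2) unfolding P2_def by blast
      have c': "cmod (f ((t - s2) + s2) - f (t - s2)) \<le> e/3" using s(2) unfolding P2_def by blast
      have eq: "f (t + (\<tau>1 - s1)) - f t = ((f (t + (\<tau>1 - s1)) - f ((t - s2) + \<tau>2)) + (f ((t - s2) + \<tau>2) - f (t - s2)))
                 - (f ((t - s2) + s2) - f (t - s2))" by simp
      have "cmod (f (t + (\<tau>1 - s1)) - f t) \<le> cmod ((f (t + (\<tau>1 - s1)) - f ((t - s2) + \<tau>2)) + (f ((t - s2) + \<tau>2) - f (t - s2)))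
                 + cmod (f ((t - s2) + s2) - f (t - s2))"
        unfolding eq by (rule norm_triangle_ineq4)
      moreover have "cmod ((f (t + (\<tau>1 - s1)) - f ((t - s2) + \<tau>2)) + (f ((t - s2) + \<tau>2) - f (t - s2)))
          \<le> cmod (f (t + (\<tau>1 - s1)) - f ((t - s2) + \<tau>2)) + cmod (f ((t - s2) + \<tau>2) - f (t - s2))"
        by (rule norm_triangle_ineq)
      ultimately show "cmod (f (t + (\<tau>1 - s1)) - f t) \<le> e" using a b c' by linarith
    qed
  qed
qed

theorem proposition2p19:
  fixes \<B> :: "'x::{complex_normed_vector, banach} set set"
    and f :: "real ^ 'n \<Rightarrow> complex"
    and F :: "real ^ 'n \<Rightarrow> 'x \<Rightarrow> 'y::{complex_normed_vector, banach}"
  assumes "\<forall>B\<in>\<B>. compact B"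
    and "\<forall>x. \<exists>B\<in>\<B>. x \<in> B"
    and "bohr_ap f"
    and "bohr_B_ap \<B> F"
  shows "bohr_B_ap \<B> (\<lambda>t x. f t *\<^sub>C F t x)"
proof -
  have cF: "continuous_on UNIV (\<lambda>(t, x). F t x)" using assms(4) by (simp add: bohr_B_ap_def)
  have cf: "continuous_on UNIV f" using assms(3) by (simp add: bohr_ap_def)
  have cf2: "continuous_on UNIV (\<lambda>z::(real^'n) \<times> 'x. f (fst z))"
    by (rule continuous_on_compose2[OF cf continuous_on_fst]) (auto intro: continuous_on_id)
  have "continuous_on UNIV (\<lambda>z::(real^'n) \<times> 'x. f (fst z) *\<^sub>C (\<lambda>(t, x). F t x) z)"
    by (rule continuous_on_scaleC[OF cf2 cF])
  moreover have "(\<lambda>z::(real^'n) \<times> 'x. f (fst z) *\<^sub>C (\<lambda>(t, x). F t x) z) = (\<lambda>(t, x). f t *\<^sub>C F t x)"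
    by (auto simp: case_prod_beta)
  ultimately have cont: "continuous_on UNIV (\<lambda>(t, x). f t *\<^sub>C F t x)" by metis
  have uc: "\<forall>e>0. \<exists>d>0. \<forall>t s. dist t s < d \<longrightarrow> cmod (f t - f s) \<le> e"
    using bohr_ap_ucont[OF assms(3)] by blast
  have Pf: "\<forall>e>0. \<exists>l>0. \<forall>t0. \<exists>\<tau>. dist \<tau> t0 \<le> l \<and> (\<forall>t. cmod (f (t + \<tau>) - f t) \<le> e)"
  proof (intro allI impI)
    fix e :: real assume e: "e > 0"
    obtain l where l: "l > 0" "\<forall>t0. \<exists>\<tau>\<in>cball t0 l. \<forall>t. cmod (f (t + \<tau>) - f t) \<le> e"
      using assms(3) e unfolding bohr_ap_def by blast
    show "\<exists>l>0. \<forall>t0. \<exists>\<tau>. dist \<tau> t0 \<le> l \<and> (\<forall>t. cmod (f (t + \<tau>) - f t) \<le> e)"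
    proof (intro exI[of _ l] conjI allI)
      show "l > 0" by fact
      fix t0
      obtain \<tau> where "\<tau> \<in> cball t0 l" "\<forall>t. cmod (f (t + \<tau>) - f t) \<le> e" using l by blast
      then show "\<exists>\<tau>. dist \<tau> t0 \<le> l \<and> (\<forall>t. cmod (f (t + \<tau>) - f t) \<le> e)"
        by (intro exI[of _ \<tau>]) (simp add: dist_commute)
    qed
  qed
  obtain Mf where Mf: "\<forall>t. cmod (f t) \<le> Mf" using bohr_ap_bounded[OF assms(3)] by blast
  have per: "\<exists>l>0. \<forall>t0. \<exists>\<tau>. dist \<tau> t0 \<le> l \<and>
        (\<forall>t. \<forall>x\<in>B. norm (f (t + \<tau>) *\<^sub>C F (t + \<tau>) x - f t *\<^sub>C F t x) \<le> e)"
    if B: "B \<in> \<B>" and e: "e > 0" for B e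
  proof -
    have PF: "\<forall>e>0. \<exists>l>0. \<forall>t0. \<exists>\<tau>. dist \<tau> t0 \<le> l \<and> (\<forall>t. \<forall>x\<in>B. norm (F (t + \<tau>) x - F t x) \<le> e)"
      using assms(4) B unfolding bohr_B_ap_def by blast
    obtain MF where MF: "\<forall>t. \<forall>x\<in>B. norm (F t x) \<le> MF"
      using bohr_B_bounded[OF assms(4) B] assms(1) B by blast
    define A where "A = max Mf 0 + max MF 0 + 1"
    have A: "A > 0" unfolding A_def by simp
    have e': "e / A > 0" using A e by simp
    obtain L where L: "L > 0" "\<forall>t0. \<exists>\<tau>. dist \<tau> t0 \<le> L \<and> (\<forall>t. \<forall>x\<in>B. norm (F (t + \<tau>) x - F t x) \<le> e / A)
            \<and> (\<forall>t. cmod (f (t + \<tau>) - f t) \<le> e / A)"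
      using common_periods[OF PF Pf uc e'] by blast
    show ?thesis
    proof (intro exI[of _ L] conjI allI)
      show "L > 0" by fact
      fix t0
      obtain \<tau> where \<tau>: "dist \<tau> t0 \<le> L" "\<forall>t. \<forall>x\<in>B. norm (F (t + \<tau>) x - F t x) \<le> e / A"
          "\<forall>t. cmod (f (t + \<tau>) - f t) \<le> e / A" using L(2) by blast
      show "\<exists>\<tau>. dist \<tau> t0 \<le> L \<and>
        (\<forall>t. \<forall>x\<in>B. norm (f (t + \<tau>) *\<^sub>C F (t + \<tau>) x - f t *\<^sub>C F t x) \<le> e)"
      proof (intro exI[of _ \<tau>] conjI allI ballI)
        show "dist \<tau> t0 \<le> L" by fact
        fix t x assume x: "x \<in> B"
        have eq: "f (t + \<tau>) *\<^sub>C F (t + \<tau>) x - f t *\<^sub>C F t x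
            = (f (t + \<tau>) - f t) *\<^sub>C F (t + \<tau>) x + f t *\<^sub>C (F (t + \<tau>) x - F t x)"
          by (simp add: scaleC_diff_left scaleC_diff_right)
        have n1: "norm ((f (t + \<tau>) - f t) *\<^sub>C F (t + \<tau>) x) \<le> (e / A) * max MF 0"
          unfolding norm_scaleC
          by (rule mult_mono) (use \<tau>(3) MF[rule_format, OF x, of "t + \<tau>"] e' in auto)
        have n2: "norm (f t *\<^sub>C (F (t + \<tau>) x - F t x)) \<le> max Mf 0 * (e / A)"
          unfolding norm_scaleC
          by (rule mult_mono) (use \<tau>(2) Mf[rule_format, of t] x e' in auto)
        have "norm (f (t + \<tau>) *\<^sub>C F (t + \<tau>) x - f t *\<^sub>C F t x) \<le> (e / A) * max MF 0 + max Mf 0 * (e / A)"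
          unfolding eq using norm_triangle_ineq[of "(f (t + \<tau>) - f t) *\<^sub>C F (t + \<tau>) x" "f t *\<^sub>C (F (t + \<tau>) x - F t x)"] n1 n2
          by linarith
        also have "\<dots> = (e / A) * (max MF 0 + max Mf 0)" by (simp add: algebra_simps)
        also have "\<dots> \<le> (e / A) * A"
          using e' unfolding A_def by (intro mult_left_mono) auto
        also have "\<dots> = e" using A by simp
        finally show "norm (f (t + \<tau>) *\<^sub>C F (t + \<tau>) x - f t *\<^sub>C F t x) \<le> e" .
      qed
    qed
  qed
  show ?thesis unfolding bohr_B_ap_def using cont per by simp
qed

end
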